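(* Let $u,v$ be homogeneous elements of $\mathfrak{B}(V)$ with $\mu(u)\cap\mu(v)=\emptyset$. If $uv=0$, then $u=0$ or $v=0$.
   Context: $V$ is a braided vector space of diagonal type over an algebraically closed field of characteristic $0$ with basis $x_1,\dots,x_n$ and braiding $C(x_i\otimes x_j)=q_{ij}x_j\otimes x_i$; $\mathfrak{B}(V)$ is its Nichols algebra, $\mathbb{Z}^n$-graded with $\deg x_i=e_i$. For a homogeneous element $w$ with $\deg w=\sum_i\lambda_ie_i$, $\mu(w):=\{x_i:\lambda_i>0\}$. *)

theory Defs
  imports "HOL-Computational_Algebra.Polynomial" "HOL-Combinatorics.Permutations"
begin

definition alg_closed :: "'k::field itself \<Rightarrow> bool" where
  "alg_closed _ \<longleftrightarrow> (\<forall>p :: 'k poly. degree p > 0 \<longrightarrow> (\<exists>x. poly p x = 0))"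

text \<open>Elements of the tensor algebra T(V), V with basis x_0,...,x_(n-1):
  finitely supported coefficient functions on words (lists of indices < n).\<close>
definition tvec :: "nat \<Rightarrow> (nat list \<Rightarrow> 'k::field) \<Rightarrow> bool" where
  "tvec n u \<longleftrightarrow> finite {w. u w \<noteq> 0} \<and> (\<forall>w. u w \<noteq> 0 \<longrightarrow> set w \<subseteq> {..<n})"

definition tmult :: "(nat list \<Rightarrow> 'k::field) \<Rightarrow> (nat list \<Rightarrow> 'k) \<Rightarrow> nat list \<Rightarrow> 'k" where
  "tmult u v w = (\<Sum>k\<le>length w. u (take k w) * v (drop k w))"

text \<open>Braid-group lift of a permutation sigma for a diagonal braiding q acting on the word w:
  the coefficient is the product of q(w_a, w_b) over inversion pairs a<b, sigma a > sigma b;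
  the resulting word has letter w_(inv sigma k) at position k.\<close>
definition perm_word :: "(nat \<Rightarrow> nat) \<Rightarrow> nat list \<Rightarrow> nat list" where
  "perm_word \<sigma> w = map (\<lambda>k. w ! inv \<sigma> k) [0..<length w]"

definition braid_coeff :: "(nat \<Rightarrow> nat \<Rightarrow> 'k::field) \<Rightarrow> (nat \<Rightarrow> nat) \<Rightarrow> nat list \<Rightarrow> 'k" where
  "braid_coeff q \<sigma> w = (\<Prod>(a,b)\<in>{(a,b). a < b \<and> b < length w \<and> \<sigma> b < \<sigma> a}. q (w ! a) (w ! b))"

text \<open>Coefficient of the word w' in Omega(w), Omega the quantum symmetrizer.\<close>
definition omega_coeff :: "(nat \<Rightarrow> nat \<Rightarrow> 'k::field) \<Rightarrow> nat list \<Rightarrow> nat list \<Rightarrow> 'k" where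
  "omega_coeff q w w' =
     (\<Sum>\<sigma>\<in>{\<sigma>. \<sigma> permutes {..<length w} \<and> perm_word \<sigma> w = w'}. braid_coeff q \<sigma> w)"

definition qsymm :: "(nat \<Rightarrow> nat \<Rightarrow> 'k::field) \<Rightarrow> (nat list \<Rightarrow> 'k) \<Rightarrow> nat list \<Rightarrow> 'k" where
  "qsymm q u w' = (\<Sum>w\<in>{w. u w \<noteq> 0}. u w * omega_coeff q w w')"

text \<open>The Nichols algebra B(V) = T(V)/ker(Omega): an element of T(V) represents 0 in B(V)
  iff it lies in the kernel of the quantum symmetrizer.\<close>
definition nichols_zero :: "(nat \<Rightarrow> nat \<Rightarrow> 'k::field) \<Rightarrow> (nat list \<Rightarrow> 'k) \<Rightarrow> bool" where
  "nichols_zero q u \<longleftrightarrow> qsymm q u = (\<lambda>_. 0)"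

definition homog :: "(nat list \<Rightarrow> 'k::zero) \<Rightarrow> (nat \<Rightarrow> nat) \<Rightarrow> bool" where
  "homog u d \<longleftrightarrow> (\<forall>w. u w \<noteq> 0 \<longrightarrow> (\<forall>i. count_list w i = d i))"

definition mu :: "nat \<Rightarrow> (nat \<Rightarrow> nat) \<Rightarrow> nat set" where
  "mu n d = {i. i < n \<and> d i > 0}"

end

theory Submission
  imports Defs "HOL-Library.Multiset"
begin


definition comb :: "nat \<Rightarrow> nat \<Rightarrow> (nat\<Rightarrow>nat) \<Rightarrow> (nat\<Rightarrow>nat) \<Rightarrow> nat \<Rightarrow> nat" where
  "comb m L s1 s2 i = (if i < m then s1 i else if i < m+L then m + s2 (i-m) else i)"

lemma comb_lt: "s1 permutes {..<m} \<Longrightarrow> s2 permutes {..<L} \<Longrightarrow> i < m \<Longrightarrow> comb m L s1 s2 i < m"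
  using permutes_in_image[of s1 "{..<m}" i] by (simp add: comb_def)

lemma comb_comp:
  assumes "s1 permutes {..<m}" "s2 permutes {..<L}"
    and "\<And>i. t1 (s1 i) = i" "\<And>i. t2 (s2 i) = i"
  shows "comb m L t1 t2 (comb m L s1 s2 i) = i"
proof -
  have a: "s1 i < m \<longleftrightarrow> i < m" using permutes_in_image[OF assms(1)] by simp
  have b: "s2 j < L \<longleftrightarrow> j < L" for j using permutes_in_image[OF assms(2)] by simp
  show ?thesis using a b[of "i-m"] assms(3,4) unfolding comb_def by auto
qed

lemma comb_permutes:
  assumes "s1 permutes {..<m}" "s2 permutes {..<L}"
  shows "comb m L s1 s2 permutes {..<m+L}"
proof (rule bij_imp_permutes)
  have i1: "inv s1 permutes {..<m}" "inv s2 permutes {..<L}"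
    using assms by (simp_all add: permutes_inv)
  show "bij_betw (comb m L s1 s2) {..<m + L} {..<m + L}"
  proof (rule bij_betw_byWitness[where f'="comb m L (inv s1) (inv s2)"])
    show "\<forall>a\<in>{..<m + L}. comb m L (inv s1) (inv s2) (comb m L s1 s2 a) = a"
      using comb_comp[OF assms] permutes_inverses[OF assms(1)] permutes_inverses[OF assms(2)] by blast
    show "\<forall>a\<in>{..<m + L}. comb m L s1 s2 (comb m L (inv s1) (inv s2) a) = a"
      using comb_comp[OF i1] permutes_inverses[OF assms(1)] permutes_inverses[OF assms(2)] by blast
    show "comb m L s1 s2 ` {..<m + L} \<subseteq> {..<m + L}"
      using permutes_in_image[OF assms(1)] permutes_in_image[OF assms(2)]
      by (auto simp: comb_def) (metis add.commute trans_less_add2)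
    show "comb m L (inv s1) (inv s2) ` {..<m + L} \<subseteq> {..<m + L}"
      using permutes_in_image[OF i1(1)] permutes_in_image[OF i1(2)]
      by (auto simp: comb_def) (metis add.commute trans_less_add2)
  qed
  show "\<And>x. x \<notin> {..<m + L} \<Longrightarrow> comb m L s1 s2 x = x" by (simp add: comb_def)
qed

lemma comb_inv:
  assumes "s1 permutes {..<m}" "s2 permutes {..<L}"
  shows "inv (comb m L s1 s2) = comb m L (inv s1) (inv s2)"
proof
  fix k
  have i1: "inv s1 permutes {..<m}" "inv s2 permutes {..<L}"
    using assms by (simp_all add: permutes_inv)
  show "inv (comb m L s1 s2) k = comb m L (inv s1) (inv s2) k"
    using permutes_inv_eq[OF comb_permutes[OF assms]]
      comb_comp[OF i1] permutes_inverses[OF assms(1)] permutes_inverses[OF assms(2)] by blast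
qed

lemma perm_word_comb:
  assumes "s1 permutes {..<length a}" "s2 permutes {..<length b}"
  shows "perm_word (comb (length a) (length b) s1 s2) (a@b) = perm_word s1 a @ perm_word s2 b"
proof -
  let ?m = "length a" and ?L = "length b"
  have i1: "inv s1 permutes {..<?m}" "inv s2 permutes {..<?L}"
    using assms by (simp_all add: permutes_inv)
  show ?thesis
    unfolding perm_word_def comb_inv[OF assms]
  proof (rule nth_equalityI)
    fix k assume "k < length (map (\<lambda>k. (a @ b) ! comb ?m ?L (inv s1) (inv s2) k) [0..<length (a @ b)])"
    then have k: "k < ?m + ?L" by simp
    show "map (\<lambda>k. (a @ b) ! comb ?m ?L (inv s1) (inv s2) k) [0..<length (a @ b)] ! k =
        (map (\<lambda>k. a ! inv s1 k) [0..<?m] @ map (\<lambda>k. b ! inv s2 k) [0..<?L]) ! k"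
    proof (cases "k < ?m")
      case True
      then have "inv s1 k < ?m" using permutes_in_image[OF i1(1)] by simp
      then show ?thesis using True k by (simp add: comb_def nth_append)
    next
      case False
      then have "inv s2 (k - ?m) < ?L" using k permutes_in_image[OF i1(2)] by simp
      moreover have "[0..<length b] ! (k - length a) = k - length a" using False k by simp
      ultimately show ?thesis using False k by (simp add: comb_def nth_append del: upt_Suc)
    qed
  qed simp
qed



lemma braid_comb:
  assumes "s1 permutes {..<length a}" "s2 permutes {..<length b}"
  shows "braid_coeff q (comb (length a) (length b) s1 s2) (a@b) = braid_coeff q s1 a * braid_coeff q s2 b"
proof -
  let ?m = "length a" and ?L = "length b"
  let ?c = "comb ?m ?L s1 s2"
  define I where "I = {(x,y). x < y \<and> y < length (a@b) \<and> ?c y < ?c x}"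
  define I1 where "I1 = {(x,y). x < y \<and> y < ?m \<and> s1 y < s1 x}"
  define I2 where "I2 = {(x,y). x < y \<and> y < ?L \<and> s2 y < s2 x}"
  define sh where "sh = (\<lambda>(x::nat,y::nat). (x + ?m, y + ?m))"
  have p1: "\<And>x. s1 x < ?m \<longleftrightarrow> x < ?m" using permutes_in_image[OF assms(1)] by simp
  have p2: "\<And>x. s2 x < ?L \<longleftrightarrow> x < ?L" using permutes_in_image[OF assms(2)] by simp
  have IU: "I = I1 \<union> sh ` I2"
  proof (rule set_eqI, rule iffI)
    fix z assume "z \<in> I"
    then obtain x y where z: "z = (x,y)" "x < y" "y < ?m + ?L" "?c y < ?c x" by (auto simp: I_def)
    show "z \<in> I1 \<union> sh ` I2"
    proof (cases "y < ?m")
      case True then show ?thesis using z by (auto simp: I1_def comb_def)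
    next
      case False
      show ?thesis
      proof (cases "x < ?m")
        case True
        then have "?c x < ?m" using p1 by (simp add: comb_def)
        moreover have "?c y \<ge> ?m" using False z by (simp add: comb_def)
        ultimately show ?thesis using z by simp
      next
        case xf: False
        have "(x - ?m, y - ?m) \<in> I2" using z False xf by (auto simp: I2_def comb_def)
        moreover have "z = sh (x - ?m, y - ?m)" using z False xf by (simp add: sh_def)
        ultimately show ?thesis by blast
      qed
    qed
  next
    fix z assume "z \<in> I1 \<union> sh ` I2"
    then show "z \<in> I"
    proof
      assume "z \<in> I1" then show ?thesis by (auto simp: I1_def I_def comb_def)
    next
      assume "z \<in> sh ` I2"
      then obtain x y where "z = (x + ?m, y + ?m)" "x < y" "y < ?L" "s2 y < s2 x"
        by (auto simp: I2_def sh_def)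
      then show ?thesis by (auto simp: I_def comb_def)
    qed
  qed
  have fin: "finite I" unfolding I_def
    by (rule finite_subset[of _ "{..<length (a@b)} \<times> {..<length (a@b)}"]) auto
  have fin1: "finite I1" "finite (sh ` I2)" using fin IU by auto
  have disj: "I1 \<inter> sh ` I2 = {}" by (auto simp: I1_def sh_def)
  have inj: "inj_on sh I2" by (auto simp: sh_def inj_on_def)
  have "braid_coeff q ?c (a@b) = (\<Prod>(x,y)\<in>I. q ((a@b) ! x) ((a@b) ! y))"
    unfolding braid_coeff_def I_def by simp
  also have "\<dots> = (\<Prod>(x,y)\<in>I1. q ((a@b) ! x) ((a@b) ! y)) * (\<Prod>(x,y)\<in>sh ` I2. q ((a@b) ! x) ((a@b) ! y))"
    unfolding IU by (rule prod.union_disjoint[OF fin1 disj])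
  also have "(\<Prod>(x,y)\<in>I1. q ((a@b) ! x) ((a@b) ! y)) = (\<Prod>(x,y)\<in>I1. q (a ! x) (a ! y))"
    by (rule prod.cong) (auto simp: I1_def nth_append)
  also have "(\<Prod>(x,y)\<in>sh ` I2. q ((a@b) ! x) ((a@b) ! y)) = (\<Prod>(x,y)\<in>I2. q (b ! x) (b ! y))"
    by (subst prod.reindex[OF inj]) (auto simp: sh_def nth_append intro!: prod.cong)
  finally show ?thesis unfolding braid_coeff_def I1_def I2_def by simp
qed



lemma set_perm_word: "\<sigma> permutes {..<length a} \<Longrightarrow> set (perm_word \<sigma> a) \<subseteq> set a"
proof
  fix x assume p: "\<sigma> permutes {..<length a}" and "x \<in> set (perm_word \<sigma> a)"
  then obtain k where k: "k < length a" "x = a ! inv \<sigma> k" by (auto simp: perm_word_def)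
  have "inv \<sigma> k < length a" using permutes_in_image[OF permutes_inv[OF p]] k by simp
  then show "x \<in> set a" using k by simp
qed

lemma length_perm_word[simp]: "length (perm_word \<sigma> a) = length a"
  by (simp add: perm_word_def)

lemma nth_perm_word: "k < length a \<Longrightarrow> perm_word \<sigma> a ! k = a ! inv \<sigma> k"
  by (simp add: perm_word_def)

lemma omega_split:
  fixes q :: "nat \<Rightarrow> nat \<Rightarrow> 'k::field"
  assumes len: "length a = length w1"
    and S: "set a \<subseteq> S" "set w1 \<subseteq> S" "set b \<inter> S = {}" "set w2 \<inter> S = {}"
  shows "omega_coeff q (a@b) (w1@w2) = omega_coeff q a w1 * omega_coeff q b w2"
proof (cases "length w2 = length b")
  case False
  have "{\<sigma>. \<sigma> permutes {..<length (a@b)} \<and> perm_word \<sigma> (a@b) = w1@w2} = {}"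
    using False len by (auto dest: arg_cong[of _ _ length])
  moreover have "{\<sigma>. \<sigma> permutes {..<length b} \<and> perm_word \<sigma> b = w2} = {}"
    using False by (auto dest: arg_cong[of _ _ length])
  ultimately show ?thesis unfolding omega_coeff_def by (simp only: sum.empty mult_zero_right)
next
  case True
  let ?m = "length a" and ?L = "length b"
  define P where "P = {\<sigma>. \<sigma> permutes {..<length (a@b)} \<and> perm_word \<sigma> (a@b) = w1@w2}"
  define P1 where "P1 = {\<sigma>. \<sigma> permutes {..<?m} \<and> perm_word \<sigma> a = w1}"
  define P2 where "P2 = {\<sigma>. \<sigma> permutes {..<?L} \<and> perm_word \<sigma> b = w2}"
  define r1 where "r1 = (\<lambda>\<sigma>::nat\<Rightarrow>nat. \<lambda>i. if i < ?m then \<sigma> i else i)"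
  define r2 where "r2 = (\<lambda>\<sigma>::nat\<Rightarrow>nat. \<lambda>i. if i < ?L then \<sigma> (i + ?m) - ?m else i)"
  define F where "F = (\<lambda>(s1,s2). comb ?m ?L s1 s2)"
  have bij: "bij_betw F (P1 \<times> P2) P"
  proof (rule bij_betw_byWitness[where f'="\<lambda>\<sigma>. (r1 \<sigma>, r2 \<sigma>)"])
    show "\<forall>z\<in>P1 \<times> P2. (r1 (F z), r2 (F z)) = z"
    proof
      fix z assume "z \<in> P1 \<times> P2"
      then obtain s1 s2 where z: "z = (s1,s2)" "s1 permutes {..<?m}" "s2 permutes {..<?L}"
        by (auto simp: P1_def P2_def)
      have "r1 (F z) = s1"
        using permutes_not_in[OF z(2)] by (auto simp: r1_def F_def z comb_def)
      moreover have "r2 (F z) = s2"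
        using permutes_not_in[OF z(3)] by (auto simp: r2_def F_def z comb_def)
      ultimately show "(r1 (F z), r2 (F z)) = z" using z by simp
    qed
    show "F ` (P1 \<times> P2) \<subseteq> P"
    proof
      fix y assume "y \<in> F ` (P1 \<times> P2)"
      then obtain s1 s2 where y: "y = F (s1,s2)" "s1 \<in> P1" "s2 \<in> P2" by blast
      then show "y \<in> P" using comb_permutes[of s1 ?m s2 ?L] perm_word_comb[of s1 a s2 b]
        by (auto simp: P_def P1_def P2_def F_def)
    qed
    have key: "\<forall>\<sigma>\<in>P. (r1 \<sigma> permutes {..<?m}) \<and> (r2 \<sigma> permutes {..<?L}) \<and> F (r1 \<sigma>, r2 \<sigma>) = \<sigma>"
    proof
      fix \<sigma> assume "\<sigma> \<in> P"
      then have sp: "\<sigma> permutes {..<?m + ?L}" and pw: "perm_word \<sigma> (a@b) = w1@w2"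
        by (auto simp: P_def)
      have inj: "inj \<sigma>" using permutes_inj[OF sp] .
      have lt: "\<And>i. \<sigma> i < ?m + ?L \<longleftrightarrow> i < ?m + ?L" using permutes_in_image[OF sp] by simp
      have K: "\<sigma> i < ?m" if "i < ?m" for i
      proof (rule ccontr)
        assume "\<not> \<sigma> i < ?m"
        define k where "k = \<sigma> i"
        have k: "?m \<le> k" "k < ?m + ?L" using that lt \<open>\<not> \<sigma> i < ?m\<close> by (auto simp: k_def)
        have "(w1@w2) ! k = (a@b) ! inv \<sigma> k"
          using pw k nth_perm_word[of k "a@b" \<sigma>] by simp
        also have "inv \<sigma> k = i" using permutes_inverses[OF sp] k_def by simp
        finally have "(w1@w2) ! k = a ! i" using that by (simp add: nth_append)
        moreover have "a ! i \<in> S" using S that by auto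
        moreover have "(w1@w2) ! k = w2 ! (k - ?m)" using k len by (simp add: nth_append)
        moreover have "w2 ! (k - ?m) \<in> set w2" using k True by simp
        ultimately show False using S by auto
      qed
      have img: "\<sigma> ` {..<?m} = {..<?m}"
        by (rule endo_inj_surj) (use K inj in \<open>auto simp: inj_on_def inj_def\<close>)
      have K2: "?m \<le> \<sigma> i" if "?m \<le> i" for i
      proof (rule ccontr)
        assume "\<not> ?m \<le> \<sigma> i"
        then have "\<sigma> i \<in> \<sigma> ` {..<?m}" using img by auto
        then obtain j where "j < ?m" "\<sigma> j = \<sigma> i" by auto
        then show False using inj that by (metis injD not_le)
      qed
      have "bij_betw (r1 \<sigma>) {..<?m} {..<?m}"
        unfolding bij_betw_def
      proof
        show "inj_on (r1 \<sigma>) {..<?m}" using inj by (auto simp: r1_def inj_on_def inj_def)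
        have "r1 \<sigma> ` {..<?m} = \<sigma> ` {..<?m}" by (auto simp: r1_def)
        then show "r1 \<sigma> ` {..<?m} = {..<?m}" using img by simp
      qed
      then have rp1: "r1 \<sigma> permutes {..<?m}"
        by (rule bij_imp_permutes) (simp add: r1_def)
      have inj2: "inj_on (r2 \<sigma>) {..<?L}"
      proof (rule inj_onI)
        fix x y assume "x \<in> {..<?L}" "y \<in> {..<?L}" "r2 \<sigma> x = r2 \<sigma> y"
        then have "\<sigma> (x + ?m) - ?m = \<sigma> (y + ?m) - ?m" by (simp add: r2_def)
        moreover have "?m \<le> \<sigma> (x + ?m)" "?m \<le> \<sigma> (y + ?m)" using K2 by auto
        ultimately have "\<sigma> (x + ?m) = \<sigma> (y + ?m)" by simp
        then show "x = y" using inj by (metis add_right_imp_eq injD)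
      qed
      have "r2 \<sigma> ` {..<?L} \<subseteq> {..<?L}"
      proof
        fix y assume "y \<in> r2 \<sigma> ` {..<?L}"
        then obtain x where x: "x < ?L" "y = \<sigma> (x + ?m) - ?m" by (auto simp: r2_def)
        have "\<sigma> (x + ?m) < ?m + ?L" using lt x by simp
        then show "y \<in> {..<?L}" using x by simp
      qed
      then have "r2 \<sigma> ` {..<?L} = {..<?L}" using inj2 by (intro endo_inj_surj) auto
      then have "bij_betw (r2 \<sigma>) {..<?L} {..<?L}" using inj2 by (simp add: bij_betw_def)
      then have rp2: "r2 \<sigma> permutes {..<?L}"
        by (rule bij_imp_permutes) (simp add: r2_def)
      have "F (r1 \<sigma>, r2 \<sigma>) = \<sigma>"
      proof
        fix i
        show "F (r1 \<sigma>, r2 \<sigma>) i = \<sigma> i"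
          using K2[of i] permutes_not_in[OF sp, of i]
          by (auto simp: F_def comb_def r1_def r2_def)
      qed
      then show "(r1 \<sigma> permutes {..<?m}) \<and> (r2 \<sigma> permutes {..<?L}) \<and> F (r1 \<sigma>, r2 \<sigma>) = \<sigma>"
        using rp1 rp2 by simp
    qed
    then show "\<forall>\<sigma>\<in>P. F (r1 \<sigma>, r2 \<sigma>) = \<sigma>" by blast
    show "(\<lambda>\<sigma>. (r1 \<sigma>, r2 \<sigma>)) ` P \<subseteq> P1 \<times> P2"
    proof
      fix z assume "z \<in> (\<lambda>\<sigma>. (r1 \<sigma>, r2 \<sigma>)) ` P"
      then obtain \<sigma> where s: "\<sigma> \<in> P" "z = (r1 \<sigma>, r2 \<sigma>)" by blast
      have k: "r1 \<sigma> permutes {..<?m}" "r2 \<sigma> permutes {..<?L}" "F (r1 \<sigma>, r2 \<sigma>) = \<sigma>"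
        using key s by auto
      have "perm_word (r1 \<sigma>) a @ perm_word (r2 \<sigma>) b = w1 @ w2"
        using perm_word_comb[OF k(1,2)] k(3) s(1) by (simp add: P_def F_def)
      then have "perm_word (r1 \<sigma>) a = w1 \<and> perm_word (r2 \<sigma>) b = w2"
        using len by (subst (asm) append_eq_append_conv) auto
      then show "z \<in> P1 \<times> P2" using k s by (simp add: P1_def P2_def)
    qed
  qed
  have "omega_coeff q a w1 * omega_coeff q b w2
      = (\<Sum>s1\<in>P1. \<Sum>s2\<in>P2. braid_coeff q s1 a * braid_coeff q s2 b)"
    unfolding omega_coeff_def P1_def P2_def by (rule sum_product)
  also have "\<dots> = (\<Sum>z\<in>P1 \<times> P2. braid_coeff q (F z) (a@b))"
    unfolding sum.cartesian_product
    by (rule sum.cong) (auto simp: P1_def P2_def F_def braid_comb)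
  also have "\<dots> = (\<Sum>\<sigma>\<in>P. braid_coeff q \<sigma> (a@b))"
    using sum.reindex_bij_betw[OF bij, of "\<lambda>\<sigma>. braid_coeff q \<sigma> (a@b)"] by simp
  finally show ?thesis unfolding omega_coeff_def P_def by simp
qed



lemma tmult_single:
  assumes "\<forall>w. u w \<noteq> 0 \<longrightarrow> length w = m"
  shows "tmult u v w = (if m \<le> length w then u (take m w) * v (drop m w) else 0)"
proof -
  have "tmult u v w = (\<Sum>k\<le>length w. if k = m then u (take m w) * v (drop m w) else 0)"
    unfolding tmult_def
  proof (rule sum.cong)
    fix k assume "k \<in> {..length w}"
    then have "length (take k w) = k" by simp
    then show "u (take k w) * v (drop k w) = (if k = m then u (take m w) * v (drop m w) else 0)"
      using assms by auto
  qed simp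
  then show ?thesis by (simp add: sum.delta)
qed

lemma qsymm_prod:
  fixes q :: "nat \<Rightarrow> nat \<Rightarrow> 'k::field"
  assumes fu: "finite {w. u w \<noteq> 0}" and fv: "finite {w. v w \<noteq> 0}"
    and lu: "\<forall>a. u a \<noteq> 0 \<longrightarrow> length a = m \<and> set a \<subseteq> S"
    and lv: "\<forall>b. v b \<noteq> 0 \<longrightarrow> set b \<inter> S = {}"
    and w: "length w1 = m" "set w1 \<subseteq> S" "set w2 \<inter> S = {}"
  shows "qsymm q (tmult u v) (w1@w2) = qsymm q u w1 * qsymm q v w2"
proof -
  define Su where "Su = {w. u w \<noteq> 0}"
  define Sv where "Sv = {w. v w \<noteq> 0}"
  define g where "g = (\<lambda>(a::nat list,b::nat list). a@b)"
  have lu': "\<forall>w. u w \<noteq> 0 \<longrightarrow> length w = m" using lu by blast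
  have tm: "tmult u v w = (if m \<le> length w then u (take m w) * v (drop m w) else 0)" for w
    using tmult_single[OF lu'] .
  have inj: "inj_on g (Su \<times> Sv)"
  proof (rule inj_onI)
    fix x y assume "x \<in> Su \<times> Sv" "y \<in> Su \<times> Sv" "g x = g y"
    then obtain a b a' b' where "x = (a,b)" "y = (a',b')" "length a = length a'" "a@b = a'@b'"
      using lu' by (cases x, cases y) (auto simp: g_def Su_def)
    then show "x = y" by simp
  qed
  have sub: "{w. tmult u v w \<noteq> 0} \<subseteq> g ` (Su \<times> Sv)"
  proof
    fix w assume "w \<in> {w. tmult u v w \<noteq> 0}"
    then have "m \<le> length w" "u (take m w) \<noteq> 0" "v (drop m w) \<noteq> 0"
      by (auto simp: tm split: if_splits)
    then have "(take m w, drop m w) \<in> Su \<times> Sv" "w = g (take m w, drop m w)"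
      by (auto simp: Su_def Sv_def g_def)
    then show "w \<in> g ` (Su \<times> Sv)" by blast
  qed
  have fin: "finite (g ` (Su \<times> Sv))" using fu fv by (simp add: Su_def Sv_def)
  have "qsymm q u w1 * qsymm q v w2 =
      (\<Sum>a\<in>Su. \<Sum>b\<in>Sv. (u a * omega_coeff q a w1) * (v b * omega_coeff q b w2))"
    unfolding qsymm_def Su_def Sv_def by (rule sum_product)
  also have "\<dots> = (\<Sum>z\<in>Su \<times> Sv. tmult u v (g z) * omega_coeff q (g z) (w1@w2))"
    unfolding sum.cartesian_product
  proof (rule sum.cong)
    fix z assume "z \<in> Su \<times> Sv"
    then obtain a b where z: "z = (a,b)" "u a \<noteq> 0" "v b \<noteq> 0" by (auto simp: Su_def Sv_def)
    have la: "length a = m" "set a \<subseteq> S" using lu z by auto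
    have lb: "set b \<inter> S = {}" using lv z by auto
    have "omega_coeff q (a@b) (w1@w2) = omega_coeff q a w1 * omega_coeff q b w2"
      by (rule omega_split[where S=S]) (use la lb w in auto)
    moreover have "tmult u v (a@b) = u a * v b" using tm[of "a@b"] la by simp
    ultimately show "(case z of (a, b) \<Rightarrow> u a * omega_coeff q a w1 * (v b * omega_coeff q b w2)) =
         tmult u v (g z) * omega_coeff q (g z) (w1 @ w2)"
      using z by (simp add: g_def algebra_simps)
  qed simp
  also have "\<dots> = (\<Sum>w\<in>g ` (Su \<times> Sv). tmult u v w * omega_coeff q w (w1@w2))"
    using sum.reindex[OF inj, of "\<lambda>w. tmult u v w * omega_coeff q w (w1@w2)"] by simp
  also have "\<dots> = (\<Sum>w\<in>{w. tmult u v w \<noteq> 0}. tmult u v w * omega_coeff q w (w1@w2))"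
    by (rule sum.mono_neutral_right[OF fin sub]) auto
  finally show ?thesis unfolding qsymm_def by simp
qed



lemma qsymm_nz:
  assumes "qsymm q u w \<noteq> 0"
  shows "\<exists>a \<sigma>. u a \<noteq> 0 \<and> \<sigma> permutes {..<length a} \<and> perm_word \<sigma> a = w"
proof -
  obtain a where a: "u a \<noteq> 0" "u a * omega_coeff q a w \<noteq> 0"
    using assms unfolding qsymm_def by (metis (mono_tags, lifting) mem_Collect_eq sum.neutral)
  then have "omega_coeff q a w \<noteq> 0" by auto
  then obtain \<sigma> where "\<sigma> permutes {..<length a} \<and> perm_word \<sigma> a = w"
    unfolding omega_coeff_def by (metis (mono_tags, lifting) mem_Collect_eq sum.neutral)
  then show ?thesis using a by blast
qed

lemma homog_set: "homog u d \<Longrightarrow> u a \<noteq> 0 \<Longrightarrow> i \<in> set a \<Longrightarrow> d i > 0"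
  unfolding homog_def by (metis count_mset count_mset_gt_0)

lemma homog_len: "homog u d \<Longrightarrow> u a \<noteq> 0 \<Longrightarrow> u a0 \<noteq> 0 \<Longrightarrow> length a = length a0"
proof -
  assume h: "homog u d" "u a \<noteq> 0" "u a0 \<noteq> 0"
  then have "mset a = mset a0" unfolding homog_def by (simp add: multiset_eq_iff count_mset)
  then show ?thesis by (metis size_mset)
qed

theorem lemma5p3:
  fixes n :: nat and q :: "nat \<Rightarrow> nat \<Rightarrow> 'k::field_char_0"
    and u v :: "nat list \<Rightarrow> 'k" and du dv :: "nat \<Rightarrow> nat"
  assumes "alg_closed TYPE('k)"
    and "\<forall>i<n. \<forall>j<n. q i j \<noteq> 0"
    and "tvec n u" and "tvec n v"
    and "homog u du" and "homog v dv"
    and "mu n du \<inter> mu n dv = {}"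
    and "nichols_zero q (tmult u v)"
  shows "nichols_zero q u \<or> nichols_zero q v"
proof (rule ccontr)
  assume "\<not> (nichols_zero q u \<or> nichols_zero q v)"
  then obtain w1 w2 where w: "qsymm q u w1 \<noteq> 0" "qsymm q v w2 \<noteq> 0"
    unfolding nichols_zero_def by blast
  obtain a0 s1 where a0: "u a0 \<noteq> 0" "s1 permutes {..<length a0}" "perm_word s1 a0 = w1"
    using qsymm_nz[OF w(1)] by blast
  obtain b0 s2 where b0: "v b0 \<noteq> 0" "s2 permutes {..<length b0}" "perm_word s2 b0 = w2"
    using qsymm_nz[OF w(2)] by blast
  define S where "S = {i. du i > 0}"
  have lu: "\<forall>a. u a \<noteq> 0 \<longrightarrow> length a = length a0 \<and> set a \<subseteq> S"
    using homog_len[OF assms(5) _ a0(1)] homog_set[OF assms(5)] by (auto simp: S_def)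
  have lv: "\<forall>b. v b \<noteq> 0 \<longrightarrow> set b \<inter> S = {}"
  proof (intro allI impI)
    fix b assume b: "v b \<noteq> 0"
    show "set b \<inter> S = {}"
    proof (rule ccontr)
      assume "set b \<inter> S \<noteq> {}"
      then obtain i where i: "i \<in> set b" "du i > 0" by (auto simp: S_def)
      have "i < n" using assms(4) b i unfolding tvec_def by blast
      moreover have "dv i > 0" using homog_set[OF assms(6) b i(1)] .
      ultimately have "i \<in> mu n du \<inter> mu n dv" using i by (simp add: mu_def)
      then show False using assms(7) by simp
    qed
  qed
  have sw1: "set w1 \<subseteq> S" using set_perm_word[OF a0(2)] a0(3) lu a0(1) by blast
  have sw2: "set w2 \<inter> S = {}" using set_perm_word[OF b0(2)] b0(3) lv b0(1) by blast
  have lw1: "length w1 = length a0" using a0(3) by auto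
  have fu: "finite {w. u w \<noteq> 0}" "finite {w. v w \<noteq> 0}"
    using assms(3,4) by (simp_all add: tvec_def)
  have "qsymm q (tmult u v) (w1@w2) = qsymm q u w1 * qsymm q v w2"
    by (rule qsymm_prod[OF fu lu lv lw1 sw1 sw2])
  also have "\<dots> \<noteq> 0" using w by simp
  finally show False using assms(8) unfolding nichols_zero_def by simp
qed


end
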